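(* Let $\mathbb{X}\in\{\mathbb{H},\mathbb{E},\mathbb{S}\}$, $d\ge 2$, let $p,q,x\in\mathbb{X}^d$, let $pq$ be a shortest geodesic segment from $p$ to $q$, and let $y$ be the point of $pq$ closest to $x$. Let $\varepsilon\in(0,1]$. If $|xy|\le\sqrt{\varepsilon}\,\min\{|py|,|qy|\}$, then (i) if $\mathbb{X}\in\{\mathbb{E},\mathbb{S}\}$: $|px|+|xq|\le(1+\varepsilon)|pq|$; (ii) if $\mathbb{X}=\mathbb{H}$ and $|pq|\le\Delta$ for some $\Delta>0$: $|px|+|xq|\le(1+e^{\Delta}\varepsilon)|pq|$.
   Context: $\mathbb{E}^d$ is Euclidean $d$-space, $\mathbb{S}^d$ the unit sphere in $\mathbb{R}^{d+1}$ with geodesic (great-circle) metric, $\mathbb{H}^d$ hyperbolic $d$-space of curvature $-1$; $|ab|$ denotes the distance between $a$ and $b$ in the respective space. *)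

theory Defs
  imports "HOL-Analysis.Analysis"
begin

text \<open>Model spaces of dimension d = DIM('a).
  E^d is 'a itself with the Euclidean distance dist.
  S^d is the unit sphere of R^{d+1} = real \<times> 'a with the great-circle distance.
  H^d is the upper sheet of the hyperboloid t^2 - |v|^2 = 1 in real \<times> 'a
  (curvature -1), with distance arcosh of the Minkowski (Lorentzian) product.\<close>

definition sph_space :: "(real \<times> 'a::euclidean_space) set" where
  "sph_space = {z. norm z = 1}"

definition sph_dist :: "real \<times> 'a::euclidean_space \<Rightarrow> real \<times> 'a \<Rightarrow> real" where
  "sph_dist z w = arccos (z \<bullet> w)"

definition hyp_space :: "(real \<times> 'a::euclidean_space) set" where
  "hyp_space = {(t, v). t > 0 \<and> t\<^sup>2 - (norm v)\<^sup>2 = 1}"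

definition minkowski :: "real \<times> 'a::euclidean_space \<Rightarrow> real \<times> 'a \<Rightarrow> real" where
  "minkowski z w = fst z * fst w - snd z \<bullet> snd w"

definition hyp_dist :: "real \<times> 'a::euclidean_space \<Rightarrow> real \<times> 'a \<Rightarrow> real" where
  "hyp_dist z w = arcosh (minkowski z w)"

definition shortest_segment ::
  "('b \<Rightarrow> 'b \<Rightarrow> real) \<Rightarrow> 'b set \<Rightarrow> 'b \<Rightarrow> 'b \<Rightarrow> 'b set \<Rightarrow> bool" where
  "shortest_segment D X p q S \<longleftrightarrow>
     (\<exists>\<gamma>. (\<forall>t\<in>{0..1}. \<gamma> t \<in> X) \<and> \<gamma> 0 = p \<and> \<gamma> 1 = q \<and>
          (\<forall>s\<in>{0..1}. \<forall>t\<in>{0..1}. D (\<gamma> s) (\<gamma> t) = \<bar>s - t\<bar> * D p q) \<and>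
          S = \<gamma> ` {0..1})"

definition closest_in :: "('b \<Rightarrow> 'b \<Rightarrow> real) \<Rightarrow> 'b set \<Rightarrow> 'b \<Rightarrow> 'b \<Rightarrow> bool" where
  "closest_in D S x y \<longleftrightarrow> y \<in> S \<and> (\<forall>z\<in>S. D x y \<le> D x z)"

end

theory Submission
  imports Defs
begin




lemma seg_basic:
  assumes seg: "shortest_segment D X p q S" and yS: "y \<in> S" and L0: "D p q \<ge> 0"
  obtains a b where "S \<subseteq> X" "a \<ge> 0" "b \<ge> 0" "a + b = D p q" "D p y = a" "D y p = a" "D q y = b" "D y q = b"
    "\<forall>s\<in>{0..a}. \<exists>z\<in>S. D y z = s \<and> D z y = s \<and> D p z = a - s \<and> D z p = a - s"
    "\<forall>s\<in>{0..b}. \<exists>z\<in>S. D y z = s \<and> D z y = s \<and> D q z = b - s \<and> D z q = b - s"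
proof -
  obtain \<gamma> where g: "\<forall>t\<in>{0..1}. \<gamma> t \<in> X" "\<gamma> 0 = p" "\<gamma> 1 = q"
    and gd: "\<forall>s\<in>{0..1}. \<forall>t\<in>{0..1}. D (\<gamma> s) (\<gamma> t) = \<bar>s - t\<bar> * D p q" and Sg: "S = \<gamma> ` {0..1}"
    using seg unfolding shortest_segment_def by metis
  define L where "L = D p q"
  obtain t0 where t0: "t0 \<in> {0..1}" "y = \<gamma> t0" using yS Sg by auto
  have SX: "S \<subseteq> X" using g Sg by auto
  have d: "D (\<gamma> s) (\<gamma> t) = \<bar>s - t\<bar> * L" if "s \<in> {0..1}" "t \<in> {0..1}" for s t
    using gd that L_def by auto
  define a where "a = t0 * L"
  define b where "b = (1 - t0) * L"
  have a: "D p y = a" "D y p = a" using d[of 0 t0] d[of t0 0] t0 g a_def by auto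
  have b: "D q y = b" "D y q = b" using d[of 1 t0] d[of t0 1] t0 g b_def by auto
  have P1: "\<exists>z\<in>S. D y z = s \<and> D z y = s \<and> D p z = a - s \<and> D z p = a - s" if s: "s \<in> {0..a}" for s
  proof (cases "L = 0")
    case True
    then have "s = 0" "a = 0" using s a_def by auto
    then show ?thesis using d[of t0 t0] d[of 0 t0] d[of t0 0] t0 g True Sg by (auto simp: a_def)
  next
    case False
    then have Lp: "L > 0" using L0 L_def by auto
    define t where "t = t0 - s / L"
    have "s / L \<le> t0" using s Lp by (auto simp: a_def field_simps)
    moreover have "s / L \<ge> 0" using s Lp by simp
    ultimately have "0 \<le> t" "t \<le> t0" by (auto simp: t_def)
    then have t: "t \<in> {0..1}" using t0 by auto
    have "D y (\<gamma> t) = s" "D (\<gamma> t) y = s" using d[of t0 t] d[of t t0] t t0 s Lp by (auto simp: t_def)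
    moreover have "\<bar>0 - t\<bar> * L = a - s" "\<bar>t - 0\<bar> * L = a - s" using \<open>0 \<le> t\<close> Lp by (auto simp: t_def a_def field_simps)
    then have "D p (\<gamma> t) = a - s" "D (\<gamma> t) p = a - s" using d[of 0 t] d[of t 0] t g by auto
    ultimately show ?thesis using Sg t by auto
  qed
  have P2: "\<exists>z\<in>S. D y z = s \<and> D z y = s \<and> D q z = b - s \<and> D z q = b - s" if s: "s \<in> {0..b}" for s
  proof (cases "L = 0")
    case True
    then have "s = 0" "b = 0" using s b_def by auto
    then show ?thesis using d[of t0 t0] d[of 1 t0] d[of t0 1] t0 g True Sg by (auto simp: b_def)
  next
    case False
    then have Lp: "L > 0" using L0 L_def by auto
    define t where "t = t0 + s / L"
    have "s / L \<le> 1 - t0" using s Lp by (auto simp: b_def field_simps)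
    moreover have "s / L \<ge> 0" using s Lp by simp
    ultimately have "t0 \<le> t" "t \<le> 1" by (auto simp: t_def)
    then have t: "t \<in> {0..1}" using t0 by auto
    have "D y (\<gamma> t) = s" "D (\<gamma> t) y = s" using d[of t0 t] d[of t t0] t t0 s Lp by (auto simp: t_def)
    moreover have "\<bar>1 - t\<bar> * L = b - s" "\<bar>t - 1\<bar> * L = b - s" using \<open>t \<le> 1\<close> Lp by (auto simp: t_def b_def field_simps)
    then have "D q (\<gamma> t) = b - s" "D (\<gamma> t) q = b - s" using d[of 1 t] d[of t 1] t g by auto
    ultimately show ?thesis using Sg t by auto
  qed
  have ab: "a \<ge> 0" "b \<ge> 0" "a + b = D p q" using t0 L0 by (auto simp: a_def b_def L_def algebra_simps mult_left_le_one_le)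
  have P1': "\<forall>s\<in>{0..a}. \<exists>z\<in>S. D y z = s \<and> D z y = s \<and> D p z = a - s \<and> D z p = a - s" using P1 by blast
  have P2': "\<forall>s\<in>{0..b}. \<exists>z\<in>S. D y z = s \<and> D z y = s \<and> D q z = b - s \<and> D z q = b - s" using P2 by blast
  show ?thesis by (rule that[OF SX ab a b P1' P2'])
qed

lemma nsq:
  fixes u v :: "'a::real_inner"
  shows "norm (u - c *\<^sub>R v)^2 = inner u u - 2*c*inner u v + c^2 * inner v v"
  unfolding power2_norm_eq_inner by (simp add: inner_diff_left inner_diff_right inner_commute algebra_simps power2_eq_square)

lemma eq_line:
  fixes u v :: "'a::real_inner"
  assumes "norm u = s" "norm v = a" "norm (v - u) = a - s" "a > 0"
  shows "u = (s / a) *\<^sub>R v"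
proof -
  have "norm (v - u)^2 = (a - s)^2" using assms by simp
  then have "inner v v - 2 * inner u v + inner u u = (a - s)^2"
    by (simp add: power2_norm_eq_inner inner_diff algebra_simps inner_commute)
  moreover have "inner v v = a^2" "inner u u = s^2" using assms by (simp_all add: power2_norm_eq_inner[symmetric])
  ultimately have uv: "inner u v = a * s" by (simp add: power2_eq_square algebra_simps)
  have "norm (u - (s / a) *\<^sub>R v)^2 = inner u u - 2 * (s/a) * inner u v + (s/a)^2 * inner v v"
    by (rule nsq)
  also have "\<dots> = 0" using uv \<open>inner v v = a^2\<close> \<open>inner u u = s^2\<close> assms(4)
    by (simp add: power2_eq_square field_simps)
  finally show ?thesis by simp
qed

lemma first_order:
  fixes X v :: "'a::real_inner"
  assumes "a > 0" "norm v = a" "\<forall>s\<in>{0<..a}. norm X \<le> norm (X - (s / a) *\<^sub>R v)"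
  shows "inner X v \<le> 0"
proof (rule ccontr)
  assume "\<not> ?thesis"
  then have E: "inner X v > 0" by simp
  define s where "s = min a (inner X v / a)"
  have s: "s \<in> {0<..a}" using E assms(1) by (auto simp: s_def)
  have "norm X ^2 \<le> norm (X - (s / a) *\<^sub>R v)^2" using assms(3) s by (simp add: power_mono)
  then have "0 \<le> - 2 * (s/a) * inner X v + (s/a)^2 * inner v v"
    unfolding nsq by (simp add: power2_norm_eq_inner)
  then have "2 * inner X v \<le> (s/a) * inner v v" using s assms(1)
    by (simp add: power2_eq_square field_simps)
  also have "\<dots> = s * a" using assms(1,2) by (simp add: power2_norm_eq_inner[symmetric] power2_eq_square)
  also have "\<dots> \<le> inner X v" using assms(1) by (simp add: s_def min_def field_simps)
  finally show False using E by simp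
qed

lemma sq_bound:
  fixes h a \<epsilon> c :: real
  assumes h0: "0 \<le> h" and a0: "0 \<le> a" and e0: "0 < \<epsilon>" and hb: "h \<le> sqrt \<epsilon> * a" and c2: "c\<^sup>2 = a\<^sup>2 + h\<^sup>2" and c0: "0 \<le> c"
  shows "c \<le> (1 + \<epsilon>) * a"
proof -
  have "h\<^sup>2 \<le> (sqrt \<epsilon> * a)\<^sup>2" using h0 hb by (simp add: power_mono)
  also have "\<dots> = \<epsilon> * a\<^sup>2" using e0 by (simp add: power_mult_distrib)
  finally have "h\<^sup>2 \<le> \<epsilon> * a\<^sup>2" .
  moreover have "0 \<le> \<epsilon> * a\<^sup>2" using e0 by simp
  moreover have "0 \<le> \<epsilon> * (\<epsilon> * a\<^sup>2)" using e0 by simp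
  moreover have "((1 + \<epsilon>) * a)\<^sup>2 = a\<^sup>2 + 2 * (\<epsilon> * a\<^sup>2) + \<epsilon> * (\<epsilon> * a\<^sup>2)" by (simp add: power2_eq_square algebra_simps)
  ultimately have "c\<^sup>2 \<le> ((1 + \<epsilon>) * a)\<^sup>2" using c2 by linarith
  moreover have "0 \<le> (1 + \<epsilon>) * a" using e0 a0 by simp
  ultimately show ?thesis by (rule power2_le_imp_le)
qed

lemma euclid_part:
  fixes p q x y :: "'a::euclidean_space" and \<epsilon> :: real
  assumes eps: "0 < \<epsilon>" "\<epsilon> \<le> 1"
    and seg: "shortest_segment dist UNIV p q S" and cl: "closest_in dist S x y"
    and hyp: "dist x y \<le> sqrt \<epsilon> * min (dist p y) (dist q y)"
  shows "dist p x + dist x q \<le> (1 + \<epsilon>) * dist p q"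
proof -
  have yS: "y \<in> S" and clz: "\<forall>z\<in>S. dist x y \<le> dist x z" using cl unfolding closest_in_def by auto
  obtain a b where "S \<subseteq> UNIV" and ab: "a \<ge> 0" "b \<ge> 0" "a + b = dist p q" "dist p y = a" "dist y p = a" "dist q y = b" "dist y q = b"
    and Pa: "\<forall>s\<in>{0..a}. \<exists>z\<in>S. dist y z = s \<and> dist z y = s \<and> dist p z = a - s \<and> dist z p = a - s"
    and Pb: "\<forall>s\<in>{0..b}. \<exists>z\<in>S. dist y z = s \<and> dist z y = s \<and> dist q z = b - s \<and> dist z q = b - s"
    by (rule seg_basic[OF seg yS zero_le_dist])
  define h where "h = dist x y"
  have h0: "h \<ge> 0" by (simp add: h_def)
  have "sqrt \<epsilon> * min a b \<le> sqrt \<epsilon> * a" "sqrt \<epsilon> * min a b \<le> sqrt \<epsilon> * b"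
    using eps by (auto intro!: mult_left_mono)
  then have hmin: "h \<le> sqrt \<epsilon> * a" "h \<le> sqrt \<epsilon> * b" using hyp ab by (auto simp: h_def)
  show ?thesis
  proof (cases "a = 0 \<or> b = 0")
    case True
    then have "h \<le> 0" using hmin by auto
    then have "x = y" using h0 by (simp add: h_def)
    then show ?thesis using ab eps mult_nonneg_nonneg[of \<epsilon> "dist p q"] by (simp add: dist_commute algebra_simps)
  next
    case False
    then have a0: "a > 0" and b0: "b > 0" using ab by auto
    define v where "v = p - y"
    define w where "w = q - y"
    define X where "X = x - y"
    have nv: "norm v = a" and nw: "norm w = b" using ab by (simp_all add: v_def w_def dist_norm)
    have nX: "norm X = h" by (simp add: X_def h_def dist_norm)
    have Ev: "inner X v \<le> 0"
    proof (rule first_order[OF a0 nv], intro ballI)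
      fix s assume s: "s \<in> {0<..a}"
      then have "s \<in> {0..a}" by auto
      then obtain z where z: "z \<in> S" "dist y z = s" "dist p z = a - s" using Pa by blast
      have "z - y = (s / a) *\<^sub>R v"
        by (rule eq_line) (use z nv a0 in \<open>simp_all add: v_def dist_norm norm_minus_commute\<close>)
      then have "X - (s / a) *\<^sub>R v = x - z" by (simp add: X_def algebra_simps)
      then show "norm X \<le> norm (X - (s / a) *\<^sub>R v)" using clz z nX by (simp add: h_def dist_norm)
    qed
    have Ew: "inner X w \<le> 0"
    proof (rule first_order[OF b0 nw], intro ballI)
      fix s assume s: "s \<in> {0<..b}"
      then have "s \<in> {0..b}" by auto
      then obtain z where z: "z \<in> S" "dist y z = s" "dist q z = b - s" using Pb by blast
      have "z - y = (s / b) *\<^sub>R w"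
        by (rule eq_line) (use z nw b0 in \<open>simp_all add: w_def dist_norm norm_minus_commute\<close>)
      then have "X - (s / b) *\<^sub>R w = x - z" by (simp add: X_def algebra_simps)
      then show "norm X \<le> norm (X - (s / b) *\<^sub>R w)" using clz z nX by (simp add: h_def dist_norm)
    qed
    have "norm (v - 1 *\<^sub>R w) = a + b" using ab by (simp add: v_def w_def dist_norm)
    then have "(a + b)^2 = inner v v - 2 * 1 * inner v w + 1^2 * inner w w" using nsq[of v 1 w] by simp
    moreover have "inner v v = a^2" "inner w w = b^2" using nv nw by (simp_all add: power2_norm_eq_inner[symmetric])
    ultimately have vw: "inner v w = - a * b" by (simp add: power2_eq_square algebra_simps)
    have "norm (w - (- b / a) *\<^sub>R v)^2 = inner w w - 2 * (- b / a) * inner w v + (- b / a)^2 * inner v v"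
      by (rule nsq)
    also have "\<dots> = 0" using vw \<open>inner v v = a^2\<close> \<open>inner w w = b^2\<close> a0
      by (simp add: inner_commute power2_eq_square field_simps)
    finally have "w = (- b / a) *\<^sub>R v" by (simp add: eq_neg_iff_add_eq_0)
    then have "inner X w = (- b / a) * inner X v" by simp
    then have "inner X v \<ge> 0" using Ew a0 b0
      by (metis divide_neg_pos mult_le_0_iff neg_less_0_iff_less not_le)
    then have E0: "inner X v = 0" "inner X w = 0" using Ev \<open>inner X w = (- b / a) * inner X v\<close> by auto
    have "(dist p x)^2 = norm (v - 1 *\<^sub>R X)^2" by (simp add: v_def X_def dist_norm algebra_simps)
    also have "\<dots> = a^2 + h^2" unfolding nsq using E0 nv nX
      by (simp add: inner_commute power2_norm_eq_inner[symmetric])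
    finally have dpx: "dist p x \<le> (1 + \<epsilon>) * a" using sq_bound[OF h0 ab(1) eps(1) hmin(1)] by simp
    have "(dist x q)^2 = norm (w - 1 *\<^sub>R X)^2" by (simp add: w_def X_def dist_norm algebra_simps norm_minus_commute)
    also have "\<dots> = b^2 + h^2" unfolding nsq using E0 nw nX
      by (simp add: inner_commute power2_norm_eq_inner[symmetric])
    finally have dxq: "dist x q \<le> (1 + \<epsilon>) * b" using sq_bound[OF h0 ab(2) eps(1) hmin(2)] by simp
    have "(1 + \<epsilon>) * dist p q = (1 + \<epsilon>) * a + (1 + \<epsilon>) * b" by (simp only: ab(3)[symmetric] distrib_left)
    then show ?thesis using dpx dxq by linarith
  qed
qed



lemma sin_ge_xcos:
  fixes x :: real
  assumes "0 \<le> x" "x \<le> pi"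
  shows "x * cos x \<le> sin x"
proof -
  have "(\<lambda>t. sin t - t * cos t) 0 \<le> (\<lambda>t. sin t - t * cos t) x"
  proof (rule DERIV_nonneg_imp_nondecreasing[OF assms(1)])
    fix t assume t: "0 \<le> t" "t \<le> x"
    have "DERIV (\<lambda>t. sin t - t * cos t) t :> t * sin t"
      by (auto intro!: derivative_eq_intros simp: algebra_simps)
    moreover have "t * sin t \<ge> 0" using t assms by (simp add: sin_ge_zero)
    ultimately show "\<exists>y. DERIV (\<lambda>t. sin t - t * cos t) t :> y \<and> 0 \<le> y" by blast
  qed
  then show ?thesis by simp
qed

lemma cos_lb:
  fixes x :: real
  assumes "0 \<le> x"
  shows "1 - x\<^sup>2 / 2 \<le> cos x"
proof -
  have "(\<lambda>t. cos t - 1 + t\<^sup>2 / 2) 0 \<le> (\<lambda>t. cos t - 1 + t\<^sup>2 / 2) x"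
  proof (rule DERIV_nonneg_imp_nondecreasing[OF assms(1)])
    fix t assume t: "0 \<le> t" "t \<le> x"
    have "DERIV (\<lambda>t. cos t - 1 + t\<^sup>2 / 2) t :> t - sin t"
      by (auto intro!: derivative_eq_intros simp: algebra_simps)
    moreover have "t - sin t \<ge> 0" using t sin_x_le_x[of t] by simp
    ultimately show "\<exists>y. DERIV (\<lambda>t. cos t - 1 + t\<^sup>2 / 2) t :> y \<and> 0 \<le> y" by blast
  qed
  then show ?thesis by simp
qed

lemma sin_concave:
  fixes t a :: real
  assumes "0 \<le> t" "t \<le> 1" "0 \<le> a" "a \<le> pi"
  shows "t * sin a \<le> sin (t * a)"
proof -
  have "(\<lambda>u. sin (t * u) - t * sin u) 0 \<le> (\<lambda>u. sin (t * u) - t * sin u) a"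
  proof (rule DERIV_nonneg_imp_nondecreasing[OF assms(3)])
    fix u assume u: "0 \<le> u" "u \<le> a"
    have "DERIV (\<lambda>u. sin (t * u) - t * sin u) u :> t * (cos (t * u) - cos u)"
      by (auto intro!: derivative_eq_intros simp: algebra_simps)
    moreover have "t * u \<le> u" using u assms by (simp add: mult_left_le_one_le)
    then have "cos u \<le> cos (t * u)" using u assms by (intro cos_monotone_0_pi_le) auto
    then have "t * (cos (t * u) - cos u) \<ge> 0" using assms by simp
    ultimately show "\<exists>y. DERIV (\<lambda>u. sin (t * u) - t * sin u) u :> y \<and> 0 \<le> y" by blast
  qed
  then show ?thesis by simp
qed

lemma key_sq:
  fixes a :: real
  assumes "0 \<le> a" "a \<le> pi / 2"
  shows "a\<^sup>2 * cos a \<le> 2 * (sin a)\<^sup>2"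
proof (cases "cos a \<ge> 1/2")
  case True
  have "a * cos a \<le> sin a" using assms by (intro sin_ge_xcos) auto
  moreover have "0 \<le> a * cos a" using assms True by simp
  ultimately have "(a * cos a)\<^sup>2 \<le> (sin a)\<^sup>2" by (simp add: power_mono)
  moreover have "a\<^sup>2 * cos a \<le> 2 * (a * cos a)\<^sup>2"
  proof -
    have "a\<^sup>2 * cos a * 1 \<le> a\<^sup>2 * cos a * (2 * cos a)" using True assms
      by (intro mult_left_mono) auto
    then show ?thesis by (simp add: power2_eq_square algebra_simps)
  qed
  ultimately show ?thesis by linarith
next
  case False
  have "(2 * a / pi) * sin (pi / 2) \<le> sin ((2 * a / pi) * (pi / 2))"
    using assms by (intro sin_concave) (auto simp: field_simps)
  then have s: "2 * a / pi \<le> sin a" by simp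
  have "0 \<le> 2 * a / pi" using assms by simp
  then have "(2 * a / pi)\<^sup>2 \<le> (sin a)\<^sup>2" using s by (simp add: power_mono)
  then have s2: "4 * a\<^sup>2 / pi\<^sup>2 \<le> (sin a)\<^sup>2" by (simp add: power_divide power_mult_distrib)
  have "pi\<^sup>2 < 4\<^sup>2" using pi_less_4 pi_gt_zero by (intro power_strict_mono) auto
  then have "pi\<^sup>2 \<le> 16" by simp
  then have "pi\<^sup>2 * a\<^sup>2 \<le> 16 * a\<^sup>2" by (intro mult_right_mono) auto
  then have "a\<^sup>2 / 2 \<le> 8 * a\<^sup>2 / pi\<^sup>2" by (simp add: field_simps)
  moreover have "a\<^sup>2 * cos a \<le> a\<^sup>2 * (1/2)" using False by (intro mult_left_mono) auto
  ultimately show ?thesis using s2 by linarith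
qed


lemma prod_cos_bound: "\<bar>cos a * cos h\<bar> \<le> (1::real)"
  by (simp add: abs_mult mult_le_one)

lemma sph_ineq:
  fixes a h \<epsilon> :: real
  assumes e0: "0 < \<epsilon>" and e1: "\<epsilon> \<le> 1" and a0: "0 < a" and api: "a < pi" and h0: "0 \<le> h"
    and hb: "h \<le> sqrt \<epsilon> * a" and hpi: "h \<le> pi / 2"
  shows "arccos (cos a * cos h) \<le> (1 + \<epsilon>) * a"
proof -
  have pb: "-1 \<le> cos a * cos h" "cos a * cos h \<le> 1" using prod_cos_bound[of a h] by linarith+
  have ch: "0 \<le> cos h" using h0 hpi by (intro cos_ge_zero) auto
  show ?thesis
  proof (cases "a \<ge> pi / 2")
    case True
    have "cos a \<le> cos (pi / 2)" using True api by (intro cos_monotone_0_pi_le) auto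
    then have "cos a \<le> 0" by simp
    then have "cos a * 1 \<le> cos a * cos h" by (intro mult_left_mono_neg) auto
    then have "arccos (cos a * cos h) \<le> arccos (cos a)" using pb by (intro arccos_le_arccos) auto
    also have "\<dots> = a" using a0 api by (intro arccos_cos) auto
    also have "\<dots> \<le> (1 + \<epsilon>) * a" using e0 a0 by simp
    finally show ?thesis .
  next
    case False
    define \<delta> where "\<delta> = \<epsilon> * a"
    have d0: "0 \<le> \<delta>" using e0 a0 by (simp add: \<delta>_def)
    have da: "\<delta> \<le> a" using e1 a0 by (simp add: \<delta>_def)
    have "h\<^sup>2 \<le> (sqrt \<epsilon> * a)\<^sup>2" using h0 hb by (simp add: power_mono)
    also have "\<dots> = \<epsilon> * a\<^sup>2" using e0 by (simp add: power_mult_distrib)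
    finally have hh: "h\<^sup>2 \<le> \<epsilon> * a\<^sup>2" .
    have "1 - cos h \<le> h\<^sup>2 / 2" using cos_lb[OF h0] by linarith
    then have c1: "cos \<delta> - cos h \<le> \<epsilon> * a\<^sup>2 / 2" using hh cos_le_one[of \<delta>] by linarith
    have ca: "0 \<le> cos a" using a0 False by (intro cos_ge_zero) auto
    have X1: "cos a * (cos \<delta> - cos h) \<le> cos a * (\<epsilon> * a\<^sup>2 / 2)" using c1 ca by (rule mult_left_mono)
    have sd: "\<epsilon> * sin a \<le> sin \<delta>" unfolding \<delta>_def using e0 e1 a0 api by (intro sin_concave) auto
    have sa: "0 \<le> sin a" using a0 api by (intro sin_ge_zero) auto
    have X2: "sin a * (\<epsilon> * sin a) \<le> sin a * sin \<delta>" using sd sa by (rule mult_left_mono)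
    have ks: "a\<^sup>2 * cos a \<le> 2 * (sin a)\<^sup>2" using a0 False by (intro key_sq) auto
    have "\<epsilon> * (a\<^sup>2 * cos a) \<le> \<epsilon> * (2 * (sin a)\<^sup>2)" using ks e0 by (intro mult_left_mono) auto
    then have X3: "cos a * (\<epsilon> * a\<^sup>2 / 2) \<le> sin a * (\<epsilon> * sin a)" by (simp add: power2_eq_square algebra_simps)
    have "cos (a + \<delta>) = cos a * cos \<delta> - sin a * sin \<delta>" by (rule cos_add)
    also have "\<dots> \<le> cos a * cos h" using X1 X2 X3 by (simp add: algebra_simps)
    finally have cc: "cos (a + \<delta>) \<le> cos a * cos h" .
    have "arccos (cos a * cos h) \<le> arccos (cos (a + \<delta>))" using cc pb by (intro arccos_le_arccos) auto
    also have "\<dots> = a + \<delta>" using d0 da a0 False by (intro arccos_cos) auto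
    finally show ?thesis by (simp add: \<delta>_def algebra_simps)
  qed
qed



lemma sph_ii: "z \<in> sph_space \<Longrightarrow> inner z z = 1"
  unfolding sph_space_def by (simp add: power2_norm_eq_inner[symmetric])

lemma sph_bounds:
  assumes "z \<in> sph_space" "w \<in> sph_space"
  shows "-1 \<le> inner z w" "inner z w \<le> 1"
proof -
  have "\<bar>inner z w\<bar> \<le> norm z * norm w" by (rule Cauchy_Schwarz_ineq2)
  then have "\<bar>inner z w\<bar> \<le> 1" using assms by (simp add: sph_space_def)
  then show "-1 \<le> inner z w" "inner z w \<le> 1" by linarith+
qed

lemma sph_cos: "z \<in> sph_space \<Longrightarrow> w \<in> sph_space \<Longrightarrow> cos (sph_dist z w) = inner z w"
  using sph_bounds[of z w] by (simp add: sph_dist_def)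

lemma sph_range: "z \<in> sph_space \<Longrightarrow> w \<in> sph_space \<Longrightarrow> 0 \<le> sph_dist z w \<and> sph_dist z w \<le> pi"
  using sph_bounds[of z w] by (simp add: sph_dist_def arccos_lbound arccos_ubound)

lemma sph_sym: "sph_dist z w = sph_dist w z"
  by (simp add: sph_dist_def inner_commute)

lemma unit_eq:
  fixes z w :: "'b::real_inner"
  assumes "inner z z = 1" "inner w w = 1" "inner z w = 1"
  shows "z = w"
proof -
  have "inner (z - w) (z - w) = 0" using assms by (simp add: inner_diff inner_commute)
  then show ?thesis by simp
qed

lemma unit_neg:
  fixes z w :: "'b::real_inner"
  assumes "inner z z = 1" "inner w w = 1" "inner z w = -1"
  shows "w = - z"
proof -
  have "inner (z + w) (z + w) = 0" using assms by (simp add: inner_add inner_commute)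
  then have "z + w = 0" by simp
  then show ?thesis by (simp add: eq_neg_iff_add_eq_0 add.commute)
qed

lemma unit_decomp:
  fixes y e z :: "'b::real_inner"
  assumes "inner y y = 1" "inner e e = 1" "inner y e = 0" "inner z z = 1" "inner z y = c" "inner z e = \<sigma>" "c\<^sup>2 + \<sigma>\<^sup>2 = 1"
  shows "z = c *\<^sub>R y + \<sigma> *\<^sub>R e"
proof -
  have "inner (z - (c *\<^sub>R y + \<sigma> *\<^sub>R e)) (z - (c *\<^sub>R y + \<sigma> *\<^sub>R e))
      = inner z z - 2 * c * inner z y - 2 * \<sigma> * inner z e + c\<^sup>2 * inner y y + \<sigma>\<^sup>2 * inner e e + 2 * c * \<sigma> * inner y e"
    by (simp add: inner_diff inner_add inner_commute power2_eq_square algebra_simps)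
  also have "\<dots> = 0" using assms by (simp add: power2_eq_square algebra_simps)
  finally show ?thesis by simp
qed

lemma fo_trig:
  fixes a X E :: real
  assumes a0: "a > 0" and H: "\<forall>s\<in>{0<..a}. X * cos s + E * sin s \<le> X"
  shows "E \<le> 0"
proof (rule ccontr)
  assume "\<not> E \<le> 0"
  then have E: "E > 0" by simp
  have "DERIV (\<lambda>s. X * cos s + E * sin s) 0 :> E"
    by (auto intro!: derivative_eq_intros)
  then obtain d where d: "d > 0" "\<forall>h>0. h < d \<longrightarrow> (\<lambda>s. X * cos s + E * sin s) 0 < (\<lambda>s. X * cos s + E * sin s) (0 + h)"
    using DERIV_pos_inc_right E by blast
  define s where "s = min d a / 2"
  have s: "s > 0" "s < d" "s \<le> a" using d a0 by (auto simp: s_def)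
  then have "X < X * cos s + E * sin s" using d by auto
  moreover have "X * cos s + E * sin s \<le> X" using H s by auto
  ultimately show False by simp
qed


lemma sph_side:
  assumes yX: "y \<in> sph_space" and pX: "p \<in> sph_space" and xX: "x \<in> sph_space" and SX: "S \<subseteq> sph_space"
    and a0: "0 < a" and api: "a < pi" and pa: "sph_dist p y = a"
    and P: "\<forall>s\<in>{0..a}. \<exists>z\<in>S. sph_dist y z = s \<and> sph_dist p z = a - s"
    and cl: "\<forall>z\<in>S. sph_dist x y \<le> sph_dist x z"
  obtains e where "inner e y = 0" "inner e e = 1" "p = cos a *\<^sub>R y + sin a *\<^sub>R e" "inner x e \<le> 0"
proof -
  have sa: "sin a > 0" using a0 api by (intro sin_gt_zero) auto
  have cpa: "inner p y = cos a" using sph_cos[OF pX yX] pa by simp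
  have yy: "inner y y = 1" and pp: "inner p p = 1" using sph_ii[OF yX] sph_ii[OF pX] by blast+
  define e where "e = (1 / sin a) *\<^sub>R (p - cos a *\<^sub>R y)"
  have ey: "inner e y = 0" using cpa yy by (simp add: e_def inner_diff_left)
  have "inner e e = (1 / sin a)^2 * (inner p p - 2 * cos a * inner p y + (cos a)^2 * inner y y)"
    by (simp add: e_def inner_diff_left inner_diff_right inner_commute power2_eq_square algebra_simps)
  also have "\<dots> = (1 / sin a)^2 * (sin a)^2" using pp yy cpa sin_cos_squared_add[of a]
    by (simp add: power2_eq_square algebra_simps)
  also have "\<dots> = 1" using sa by (simp add: power2_eq_square)
  finally have ee: "inner e e = 1" .
  have pe: "p = cos a *\<^sub>R y + sin a *\<^sub>R e" using sa by (simp add: e_def)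
  have key: "\<forall>s\<in>{0<..a}. inner x y * cos s + inner x e * sin s \<le> inner x y"
  proof
    fix s assume s: "s \<in> {0<..a}"
    then have "s \<in> {0..a}" by auto
    then obtain z where z: "z \<in> S" "sph_dist y z = s" "sph_dist p z = a - s" using P by blast
    have zX: "z \<in> sph_space" using z SX by auto
    have zz: "inner z z = 1" using sph_ii[OF zX] .
    have zy: "inner z y = cos s" using sph_cos[OF yX zX] z by (simp add: inner_commute)
    have zp: "inner z p = cos a * cos s + sin a * sin s" using sph_cos[OF pX zX] z cos_diff[of a s] by (simp add: inner_commute)
    have ze: "inner z e = sin s" using zy zp sa by (simp add: e_def inner_diff_right field_simps)
    have zd: "z = cos s *\<^sub>R y + sin s *\<^sub>R e"
      by (rule unit_decomp[OF yy ee _ zz zy ze]) (use ey in \<open>simp_all add: inner_commute\<close>)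
    have "inner x z \<le> inner x y"
    proof (rule ccontr)
      assume "\<not> ?thesis"
      then have "inner x y < inner x z" by simp
      then have "arccos (inner x z) < arccos (inner x y)"
        using sph_bounds[OF xX yX] sph_bounds[OF xX zX] by (intro arccos_less_arccos) auto
      then have "sph_dist x z < sph_dist x y" by (simp add: sph_dist_def)
      then show False using cl z by force
    qed
    then show "inner x y * cos s + inner x e * sin s \<le> inner x y" using zd by (simp add: inner_add_right algebra_simps)
  qed
  have "inner x e \<le> 0" using fo_trig[OF a0 key] .
  then show ?thesis using that ey ee pe by blast
qed


lemma sphere_part:
  fixes p q x y :: "real \<times> 'a::euclidean_space" and \<epsilon> :: real
  assumes e0: "0 < \<epsilon>" and e1: "\<epsilon> \<le> 1"
    and pX: "p \<in> sph_space" and qX: "q \<in> sph_space" and xX: "x \<in> sph_space"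
    and seg: "shortest_segment sph_dist sph_space p q S" and cl: "closest_in sph_dist S x y"
    and hyp: "sph_dist x y \<le> sqrt \<epsilon> * min (sph_dist p y) (sph_dist q y)"
  shows "sph_dist p x + sph_dist x q \<le> (1 + \<epsilon>) * sph_dist p q"
proof -
  have yS: "y \<in> S" and clz: "\<forall>z\<in>S. sph_dist x y \<le> sph_dist x z" using cl unfolding closest_in_def by auto
  have L0: "0 \<le> sph_dist p q" and Lpi: "sph_dist p q \<le> pi" using sph_range[OF pX qX] by auto
  obtain a b where SX: "S \<subseteq> sph_space" and ab: "a \<ge> 0" "b \<ge> 0" "a + b = sph_dist p q" "sph_dist p y = a" "sph_dist y p = a" "sph_dist q y = b" "sph_dist y q = b"
    and Pa: "\<forall>s\<in>{0..a}. \<exists>z\<in>S. sph_dist y z = s \<and> sph_dist z y = s \<and> sph_dist p z = a - s \<and> sph_dist z p = a - s"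
    and Pb: "\<forall>s\<in>{0..b}. \<exists>z\<in>S. sph_dist y z = s \<and> sph_dist z y = s \<and> sph_dist q z = b - s \<and> sph_dist z q = b - s"
    by (rule seg_basic[OF seg yS L0])
  have yX: "y \<in> sph_space" using SX yS by auto
  define h where "h = sph_dist x y"
  have h0: "h \<ge> 0" using sph_range[OF xX yX] by (simp add: h_def)
  have "sqrt \<epsilon> * min a b \<le> sqrt \<epsilon> * a" "sqrt \<epsilon> * min a b \<le> sqrt \<epsilon> * b"
    using e0 by (auto intro!: mult_left_mono)
  then have hmin: "h \<le> sqrt \<epsilon> * a" "h \<le> sqrt \<epsilon> * b" using hyp ab by (auto simp: h_def)
  have se1: "sqrt \<epsilon> \<le> 1" using e1 by simp
  have "sqrt \<epsilon> * a \<le> 1 * a" "sqrt \<epsilon> * b \<le> 1 * b" using se1 ab by (intro mult_right_mono; simp)+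
  then have "h \<le> a" "h \<le> b" using hmin by linarith+
  then have hpi: "h \<le> pi / 2" using ab Lpi by linarith
  show ?thesis
  proof (cases "a = 0 \<or> b = 0")
    case True
    then have "h \<le> 0" using hmin by auto
    then have "h = 0" using h0 by simp
    then have "arccos (inner x y) = 0" by (simp add: h_def sph_dist_def)
    then have "inner x y = 1" using sph_bounds[OF xX yX] by (simp add: arccos_eq_0_iff)
    then have "x = y" using unit_eq sph_ii[OF xX] sph_ii[OF yX] by blast
    then show ?thesis using ab e0 L0 mult_nonneg_nonneg[of \<epsilon> "sph_dist p q"] by (simp add: sph_sym algebra_simps)
  next
    case False
    then have a0: "a > 0" and b0: "b > 0" using ab by auto
    have api: "a < pi" and bpi: "b < pi" using ab a0 b0 Lpi by linarith+
    have sa: "sin a > 0" and sb: "sin b > 0" using a0 api b0 bpi by (auto intro!: sin_gt_zero)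
    have Pa': "\<forall>s\<in>{0..a}. \<exists>z\<in>S. sph_dist y z = s \<and> sph_dist p z = a - s" using Pa by blast
    have Pb': "\<forall>s\<in>{0..b}. \<exists>z\<in>S. sph_dist y z = s \<and> sph_dist q z = b - s" using Pb by blast
    obtain e where ey: "inner e y = 0" and ee: "inner e e = 1" and pe: "p = cos a *\<^sub>R y + sin a *\<^sub>R e" and xe: "inner x e \<le> 0"
      by (rule sph_side[OF yX pX xX SX a0 api ab(4) Pa' clz])
    obtain e' where ey': "inner e' y = 0" and ee': "inner e' e' = 1" and qe: "q = cos b *\<^sub>R y + sin b *\<^sub>R e'" and xe': "inner x e' \<le> 0"
      by (rule sph_side[OF yX qX xX SX b0 bpi ab(6) Pb' clz])
    have yy: "inner y y = 1" using sph_ii[OF yX] .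
    have "inner p q = cos (a + b)" using sph_cos[OF pX qX] ab by simp
    also have "\<dots> = cos a * cos b - sin a * sin b" by (rule cos_add)
    finally have pq1: "inner p q = cos a * cos b - sin a * sin b" .
    have "inner p q = inner (cos a *\<^sub>R y + sin a *\<^sub>R e) (cos b *\<^sub>R y + sin b *\<^sub>R e')" using pe qe by simp
    also have "\<dots> = cos a * cos b * inner y y + cos a * sin b * inner e' y + sin a * cos b * inner e y + sin a * sin b * inner e e'"
      by (simp add: inner_add_left inner_add_right inner_commute algebra_simps)
    also have "\<dots> = cos a * cos b + sin a * sin b * inner e e'" using yy ey ey' by simp
    finally have "sin a * sin b * inner e e' = sin a * sin b * (-1)" using pq1 by simp
    moreover have nz: "sin a * sin b \<noteq> 0" using sa sb by simp
    ultimately have "inner e e' = -1" by (metis mult_left_cancel)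
    then have "e' = - e" using unit_neg ee ee' by blast
    then have "inner x e \<ge> 0" using xe' by simp
    then have xe0: "inner x e = 0" using xe by simp
    have xy: "inner x y = cos h" using sph_cos[OF xX yX] by (simp add: h_def)
    have yx: "inner y x = cos h" using xy by (simp add: inner_commute)
    have ex: "inner e x = 0" using xe0 by (simp add: inner_commute)
    have "inner p x = cos a * inner y x + sin a * inner e x" using pe by (simp add: inner_add_left)
    then have "inner p x = cos a * cos h" using yx ex by simp
    then have dpx: "sph_dist p x \<le> (1 + \<epsilon>) * a" using sph_ineq[OF e0 e1 a0 api h0 hmin(1) hpi] by (simp add: sph_dist_def)
    have "e' = - e" by fact
    then have ex': "inner e' x = 0" using ex by simp
    have "inner q x = cos b * inner y x + sin b * inner e' x" using qe by (simp add: inner_add_left)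
    then have "inner x q = cos b * cos h" using yx ex' by (simp add: inner_commute)
    then have dqx: "sph_dist x q \<le> (1 + \<epsilon>) * b" using sph_ineq[OF e0 e1 b0 bpi h0 hmin(2) hpi] by (simp add: sph_dist_def)
    have "(1 + \<epsilon>) * sph_dist p q = (1 + \<epsilon>) * a + (1 + \<epsilon>) * b" by (simp only: ab(3)[symmetric] distrib_left)
    then show ?thesis using dpx dqx by linarith
  qed
qed



lemma sinh_ge_x:
  fixes x :: real assumes "0 \<le> x" shows "x \<le> sinh x"
proof -
  have "(\<lambda>t. sinh t - t) 0 \<le> (\<lambda>t. sinh t - t) x"
  proof (rule DERIV_nonneg_imp_nondecreasing[OF assms])
    fix t assume t: "0 \<le> t" "t \<le> x"
    have "DERIV (\<lambda>t. sinh t - t) t :> cosh t - 1" by (auto intro!: derivative_eq_intros)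
    moreover have "cosh t - 1 \<ge> 0" using cosh_real_ge_1[of t] by simp
    ultimately show "\<exists>y. DERIV (\<lambda>t. sinh t - t) t :> y \<and> 0 \<le> y" by blast
  qed
  then show ?thesis by simp
qed

lemma sinh_le_xcosh:
  fixes x :: real assumes "0 \<le> x" shows "sinh x \<le> x * cosh x"
proof -
  have "(\<lambda>t. t * cosh t - sinh t) 0 \<le> (\<lambda>t. t * cosh t - sinh t) x"
  proof (rule DERIV_nonneg_imp_nondecreasing[OF assms])
    fix t assume t: "0 \<le> t" "t \<le> x"
    have "DERIV (\<lambda>t. t * cosh t - sinh t) t :> t * sinh t" by (auto intro!: derivative_eq_intros simp: algebra_simps)
    moreover have "t * sinh t \<ge> 0" using t by simp
    ultimately show "\<exists>y. DERIV (\<lambda>t. t * cosh t - sinh t) t :> y \<and> 0 \<le> y" by blast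
  qed
  then show ?thesis by simp
qed

lemma cosh_m1_le:
  fixes x :: real assumes "0 \<le> x" shows "cosh x - 1 \<le> x * sinh x / 2"
proof -
  have "(\<lambda>t. t * sinh t / 2 - cosh t + 1) 0 \<le> (\<lambda>t. t * sinh t / 2 - cosh t + 1) x"
  proof (rule DERIV_nonneg_imp_nondecreasing[OF assms])
    fix t assume t: "0 \<le> t" "t \<le> x"
    have "DERIV (\<lambda>t. t * sinh t / 2 - cosh t + 1) t :> (t * cosh t - sinh t) / 2"
      by (auto intro!: derivative_eq_intros simp: algebra_simps)
    moreover have "(t * cosh t - sinh t) / 2 \<ge> 0" using sinh_le_xcosh[of t] t by simp
    ultimately show "\<exists>y. DERIV (\<lambda>t. t * sinh t / 2 - cosh t + 1) t :> y \<and> 0 \<le> y" by blast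
  qed
  then show ?thesis by simp
qed

lemma sinh_convex:
  fixes t a :: real
  assumes "0 \<le> t" "t \<le> 1" "0 \<le> a"
  shows "sinh (t * a) \<le> t * sinh a"
proof -
  have "(\<lambda>u. t * sinh u - sinh (t * u)) 0 \<le> (\<lambda>u. t * sinh u - sinh (t * u)) a"
  proof (rule DERIV_nonneg_imp_nondecreasing[OF assms(3)])
    fix u assume u: "0 \<le> u" "u \<le> a"
    have "DERIV (\<lambda>u. t * sinh u - sinh (t * u)) u :> t * (cosh u - cosh (t * u))"
      by (auto intro!: derivative_eq_intros simp: algebra_simps)
    moreover have "t * u \<le> u" using u assms by (simp add: mult_left_le_one_le)
    then have "cosh (t * u) \<le> cosh u" using u assms by (subst cosh_real_nonneg_le_iff) auto
    then have "t * (cosh u - cosh (t * u)) \<ge> 0" using assms by simp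
    ultimately show "\<exists>y. DERIV (\<lambda>u. t * sinh u - sinh (t * u)) u :> y \<and> 0 \<le> y" by blast
  qed
  then show ?thesis by simp
qed


lemma hyp_ineq:
  fixes a h \<epsilon> \<Delta> :: real
  assumes e0: "0 < \<epsilon>" and e1: "\<epsilon> \<le> 1" and a0: "0 < a" and h0: "0 \<le> h"
    and hb: "h \<le> sqrt \<epsilon> * a" and ha: "h \<le> a" and aD: "a \<le> \<Delta>"
  shows "arcosh (cosh a * cosh h) \<le> (1 + exp \<Delta> * \<epsilon>) * a"
proof -
  have "h\<^sup>2 \<le> (sqrt \<epsilon> * a)\<^sup>2" using h0 hb by (simp add: power_mono)
  also have "\<dots> = \<epsilon> * a\<^sup>2" using e0 by (simp add: power_mult_distrib)
  finally have hh: "h\<^sup>2 \<le> \<epsilon> * a\<^sup>2" .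
  have "sinh ((h / a) * a) \<le> (h / a) * sinh a" using h0 ha a0 by (intro sinh_convex) auto
  then have s1: "sinh h \<le> (h / a) * sinh a" using a0 by simp
  have "cosh h - 1 \<le> h * sinh h / 2" using cosh_m1_le[OF h0] .
  also have "\<dots> \<le> h * ((h / a) * sinh a) / 2"
  proof -
    have "h * sinh h \<le> h * ((h / a) * sinh a)" using s1 h0 by (rule mult_left_mono)
    then show ?thesis by (rule divide_right_mono) simp
  qed
  also have "\<dots> = h\<^sup>2 * (sinh a / a) / 2" by (simp add: power2_eq_square)
  also have "\<dots> \<le> (\<epsilon> * a\<^sup>2) * (sinh a / a) / 2" using hh a0 by (intro divide_right_mono mult_right_mono) auto
  also have "\<dots> = \<epsilon> * a * sinh a / 2" using a0 by (simp add: power2_eq_square)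
  finally have c1: "cosh h - 1 \<le> \<epsilon> * a * sinh a / 2" .
  have sa: "0 \<le> sinh a" using a0 by simp
  have "cosh a \<le> exp a" unfolding cosh_def using exp_ge_zero[of "-a"] exp_le_cancel_iff[of "-a" a] a0 by simp
  then have ce: "cosh a \<le> exp \<Delta>" using aD by (meson exp_le_cancel_iff order_trans)
  define \<delta> where "\<delta> = exp \<Delta> * \<epsilon> * a"
  have d0: "0 \<le> \<delta>" using e0 a0 by (simp add: \<delta>_def)
  have "cosh a * (cosh h - 1) \<le> cosh a * (\<epsilon> * a * sinh a / 2)" using c1 by (intro mult_left_mono) auto
  also have "\<dots> \<le> exp \<Delta> * (\<epsilon> * a * sinh a / 2)" using ce e0 a0 sa by (intro mult_right_mono) auto
  also have "\<dots> \<le> exp \<Delta> * (\<epsilon> * a * sinh a)" using e0 a0 sa by (intro mult_left_mono) auto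
  also have "\<dots> = sinh a * \<delta>" by (simp add: \<delta>_def)
  also have "\<dots> \<le> sinh a * sinh \<delta>" using sinh_ge_x[OF d0] sa by (rule mult_left_mono)
  finally have X: "cosh a * (cosh h - 1) \<le> sinh a * sinh \<delta>" .
  have C: "cosh a * 1 \<le> cosh a * cosh \<delta>" using cosh_real_ge_1[of \<delta>] by (intro mult_left_mono) auto
  have X': "cosh a * cosh h \<le> cosh a * 1 + sinh a * sinh \<delta>" using X by (simp add: algebra_simps)
  have "cosh a * cosh h \<le> cosh a * cosh \<delta> + sinh a * sinh \<delta>" using X' C by linarith
  also have "\<dots> = cosh (a + \<delta>)" by (simp add: cosh_add)
  finally have cc: "cosh a * cosh h \<le> cosh (a + \<delta>)" .
  have ge1: "1 \<le> cosh a * cosh h" using cosh_real_ge_1[of a] cosh_real_ge_1[of h] by (metis mult_mono' mult_1 zero_le_one)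
  have "arcosh (cosh a * cosh h) \<le> arcosh (cosh (a + \<delta>))"
    using cc ge1 arcosh_less_iff_real[of "cosh (a + \<delta>)" "cosh a * cosh h"] by (auto simp: not_less[symmetric])
  also have "\<dots> = a + \<delta>" using a0 d0 by (intro arcosh_cosh_real) auto
  finally show ?thesis by (simp add: \<delta>_def algebra_simps)
qed



lemma mk_sym: "minkowski z w = minkowski w z"
  by (simp add: minkowski_def inner_commute)
lemma mk_add_left: "minkowski (u + v) w = minkowski u w + minkowski v w"
  by (simp add: minkowski_def inner_add_left algebra_simps)
lemma mk_add_right: "minkowski w (u + v) = minkowski w u + minkowski w v"
  by (simp add: minkowski_def inner_add_right algebra_simps)
lemma mk_diff_left: "minkowski (u - v) w = minkowski u w - minkowski v w"
  by (simp add: minkowski_def inner_diff_left algebra_simps)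
lemma mk_diff_right: "minkowski w (u - v) = minkowski w u - minkowski w v"
  by (simp add: minkowski_def inner_diff_right algebra_simps)
lemma mk_scale_left: "minkowski (c *\<^sub>R u) w = c * minkowski u w"
  by (simp add: minkowski_def algebra_simps)
lemma mk_scale_right: "minkowski w (c *\<^sub>R u) = c * minkowski w u"
  by (simp add: minkowski_def algebra_simps)
lemma mk_minus_left: "minkowski (- u) w = - minkowski u w"
  by (simp add: minkowski_def)
lemma mk_minus_right: "minkowski w (- u) = - minkowski w u"
  by (simp add: minkowski_def)
lemmas mk_lin = mk_add_left mk_add_right mk_diff_left mk_diff_right mk_scale_left mk_scale_right mk_minus_left mk_minus_right

lemma hyp_ii: "z \<in> hyp_space \<Longrightarrow> minkowski z z = 1"
  unfolding hyp_space_def minkowski_def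
  by (cases z) (simp add: power2_norm_eq_inner[symmetric] power2_eq_square)

lemma hyp_ge1:
  assumes "z \<in> hyp_space" "w \<in> hyp_space"
  shows "1 \<le> minkowski z w"
proof -
  obtain t u where z: "z = (t, u)" by (cases z)
  obtain s v where w: "w = (s, v)" by (cases w)
  have t: "t > 0" "t\<^sup>2 = 1 + (norm u)\<^sup>2" using assms z by (auto simp: hyp_space_def)
  have s: "s > 0" "s\<^sup>2 = 1 + (norm v)\<^sup>2" using assms w by (auto simp: hyp_space_def)
  define A where "A = norm u"
  define B where "B = norm v"
  have A0: "A \<ge> 0" "B \<ge> 0" by (simp_all add: A_def B_def)
  have cs: "inner u v \<le> A * B" unfolding A_def B_def by (rule norm_cauchy_schwarz)
  have ts: "(t * s)\<^sup>2 = (1 + A\<^sup>2) * (1 + B\<^sup>2)" using t(2) s(2) unfolding A_def B_def by (simp only: power_mult_distrib)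
  have id: "(1 + A * B)\<^sup>2 + (A - B)\<^sup>2 = (1 + A\<^sup>2) * (1 + B\<^sup>2)" by (simp add: power2_eq_square algebra_simps)
  have "0 \<le> (A - B)\<^sup>2" by simp
  then have "(1 + A * B)\<^sup>2 \<le> (t * s)\<^sup>2" using ts id by linarith
  moreover have "0 \<le> t * s" using t(1) s(1) by simp
  ultimately have "1 + A * B \<le> t * s" by (rule power2_le_imp_le)
  then show ?thesis using cs z w by (simp add: minkowski_def)
qed

lemma hyp_cosh: "z \<in> hyp_space \<Longrightarrow> w \<in> hyp_space \<Longrightarrow> cosh (hyp_dist z w) = minkowski z w"
  using hyp_ge1[of z w] by (simp add: hyp_dist_def)

lemma hyp_nonneg: "z \<in> hyp_space \<Longrightarrow> w \<in> hyp_space \<Longrightarrow> 0 \<le> hyp_dist z w"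
  using hyp_ge1[of z w] by (simp add: hyp_dist_def)

lemma hyp_sym: "hyp_dist z w = hyp_dist w z"
  by (simp add: hyp_dist_def mk_sym)

lemma null_zero:
  assumes yH: "y \<in> hyp_space" and wy: "minkowski w y = 0" and ww: "minkowski w w \<ge> 0"
  shows "w = 0"
proof -
  obtain t v where y: "y = (t, v)" by (cases y)
  obtain \<sigma> u where w: "w = (\<sigma>, u)" by (cases w)
  have t: "t > 0" "t\<^sup>2 = 1 + (norm v)\<^sup>2" using yH y by (auto simp: hyp_space_def)
  have e1: "\<sigma> * t = inner u v" using wy w y by (simp add: minkowski_def)
  have "inner u u \<le> \<sigma>\<^sup>2" using ww w by (simp add: minkowski_def power2_eq_square)
  then have e2: "(norm u)\<^sup>2 \<le> \<sigma>\<^sup>2" by (simp add: power2_norm_eq_inner)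
  have "\<bar>inner u v\<bar> \<le> norm u * norm v" by (rule Cauchy_Schwarz_ineq2)
  then have "(inner u v)\<^sup>2 \<le> (norm u * norm v)\<^sup>2" by (metis abs_ge_zero power2_abs power_mono)
  also have "\<dots> = (norm u)\<^sup>2 * (norm v)\<^sup>2" by (simp add: power_mult_distrib)
  also have "\<dots> \<le> \<sigma>\<^sup>2 * (norm v)\<^sup>2" using e2 by (intro mult_right_mono) auto
  finally have "(\<sigma> * t)\<^sup>2 \<le> \<sigma>\<^sup>2 * (norm v)\<^sup>2" using e1 by simp
  then have "\<sigma>\<^sup>2 * (1 + (norm v)\<^sup>2) \<le> \<sigma>\<^sup>2 * (norm v)\<^sup>2" using t by (simp add: power_mult_distrib)
  then have "\<sigma>\<^sup>2 \<le> 0" by (simp add: algebra_simps)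
  then have s0: "\<sigma> = 0" by simp
  then have "(norm u)\<^sup>2 \<le> 0" using e2 by simp
  then have "u = 0" by simp
  then show ?thesis using s0 w by (simp add: zero_prod_def)
qed

lemma hyp_eq:
  assumes "x \<in> hyp_space" "y \<in> hyp_space" "minkowski x y = 1"
  shows "x = y"
proof -
  have "minkowski (x - y) y = 0" using assms hyp_ii[of y] by (simp add: mk_lin)
  moreover have "minkowski (x - y) (x - y) = 0" using assms hyp_ii[of y] hyp_ii[of x] by (simp add: mk_lin mk_sym[of y x])
  ultimately have "x - y = 0" by (intro null_zero[OF assms(2)]) auto
  then show ?thesis by simp
qed

lemma decomp_h:
  assumes yH: "y \<in> hyp_space" and ee: "minkowski e e = -1" and ey: "minkowski e y = 0" and zz: "minkowski z z = 1"
    and zy: "minkowski z y = c" and ze: "minkowski z e = - \<sigma>" and cs: "c\<^sup>2 - \<sigma>\<^sup>2 = 1"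
  shows "z = c *\<^sub>R y + \<sigma> *\<^sub>R e"
proof -
  have yy: "minkowski y y = 1" using hyp_ii[OF yH] .
  define w where "w = z - (c *\<^sub>R y + \<sigma> *\<^sub>R e)"
  have "minkowski w y = c - c * 1 - \<sigma> * 0" using zy yy ey by (simp add: w_def mk_lin)
  then have wy: "minkowski w y = 0" by simp
  have "minkowski w w = minkowski z z - 2 * c * minkowski z y - 2 * \<sigma> * minkowski z e + c\<^sup>2 * minkowski y y + \<sigma>\<^sup>2 * minkowski e e + 2 * c * \<sigma> * minkowski e y"
    by (simp add: w_def mk_lin mk_sym[of y z] mk_sym[of e z] mk_sym[of y e] power2_eq_square algebra_simps)
  also have "\<dots> = 0"
  proof -
    have "c * c = 1 + \<sigma> * \<sigma>" using cs by (simp add: power2_eq_square algebra_simps)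
    then show ?thesis using zz zy ze yy ee ey by (simp add: power2_eq_square algebra_simps)
  qed
  finally have "w = 0" using null_zero[OF yH wy] by simp
  then show ?thesis by (simp add: w_def)
qed

lemma fo_hyp:
  fixes a X E :: real
  assumes a0: "a > 0" and H: "\<forall>s\<in>{0<..a}. X \<le> X * cosh s + E * sinh s"
  shows "0 \<le> E"
proof (rule ccontr)
  assume "\<not> 0 \<le> E"
  then have E: "E < 0" by simp
  have "DERIV (\<lambda>s. X * cosh s + E * sinh s) 0 :> E"
    by (auto intro!: derivative_eq_intros)
  then obtain d where d: "d > 0" "\<forall>h>0. h < d \<longrightarrow> (\<lambda>s. X * cosh s + E * sinh s) 0 > (\<lambda>s. X * cosh s + E * sinh s) (0 + h)"
    using DERIV_neg_dec_right E by blast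
  define s where "s = min d a / 2"
  have s: "s > 0" "s < d" "s \<le> a" using d a0 by (auto simp: s_def)
  then have "X > X * cosh s + E * sinh s" using d by auto
  moreover have "X \<le> X * cosh s + E * sinh s" using H s by auto
  ultimately show False by simp
qed


lemma hyp_side:
  assumes yX: "y \<in> hyp_space" and pX: "p \<in> hyp_space" and xX: "x \<in> hyp_space" and SX: "S \<subseteq> hyp_space"
    and a0: "0 < a" and pa: "hyp_dist p y = a"
    and P: "\<forall>s\<in>{0..a}. \<exists>z\<in>S. hyp_dist y z = s \<and> hyp_dist p z = a - s"
    and cl: "\<forall>z\<in>S. hyp_dist x y \<le> hyp_dist x z"
  obtains e where "minkowski e y = 0" "minkowski e e = -1" "p = cosh a *\<^sub>R y + sinh a *\<^sub>R e" "0 \<le> minkowski x e"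
proof -
  have sa: "sinh a > 0" using a0 by simp
  have cpa: "minkowski p y = cosh a" using hyp_cosh[OF pX yX] pa by simp
  have yy: "minkowski y y = 1" and pp: "minkowski p p = 1" using hyp_ii[OF yX] hyp_ii[OF pX] by blast+
  define e where "e = (1 / sinh a) *\<^sub>R (p - cosh a *\<^sub>R y)"
  have ey: "minkowski e y = 0" using cpa yy by (simp add: e_def mk_lin)
  have "minkowski e e = (1 / sinh a)^2 * (minkowski p p - 2 * cosh a * minkowski p y + (cosh a)^2 * minkowski y y)"
    by (simp add: e_def mk_lin mk_sym[of y p] power2_eq_square algebra_simps)
  also have "\<dots> = (1 / sinh a)^2 * (- ((sinh a)^2))"
  proof -
    have "minkowski p p - 2 * cosh a * minkowski p y + (cosh a)^2 * minkowski y y = - ((sinh a)^2)"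
      using pp yy cpa cosh_square_eq[of a] by (simp add: power2_eq_square)
    then show ?thesis by simp
  qed
  also have "\<dots> = -1" using sa by (simp add: power2_eq_square)
  finally have ee: "minkowski e e = -1" .
  have pe: "p = cosh a *\<^sub>R y + sinh a *\<^sub>R e" using sa by (simp add: e_def)
  have key: "\<forall>s\<in>{0<..a}. minkowski x y \<le> minkowski x y * cosh s + minkowski x e * sinh s"
  proof
    fix s assume s: "s \<in> {0<..a}"
    then have "s \<in> {0..a}" by auto
    then obtain z where z: "z \<in> S" "hyp_dist y z = s" "hyp_dist p z = a - s" using P by blast
    have zX: "z \<in> hyp_space" using z SX by auto
    have zz: "minkowski z z = 1" using hyp_ii[OF zX] .
    have zy: "minkowski z y = cosh s" using hyp_cosh[OF yX zX] z by (simp add: mk_sym)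
    have zp: "minkowski z p = cosh a * cosh s - sinh a * sinh s" using hyp_cosh[OF pX zX] z cosh_diff[of a s] by (simp add: mk_sym)
    have ze: "minkowski z e = - sinh s" using zy zp sa by (simp add: e_def mk_lin field_simps)
    have zd: "z = cosh s *\<^sub>R y + sinh s *\<^sub>R e"
      by (rule decomp_h[OF yX ee ey zz zy ze]) (simp add: cosh_square_eq)
    have "minkowski x y \<le> minkowski x z"
    proof (rule ccontr)
      assume "\<not> ?thesis"
      then have "minkowski x z < minkowski x y" by simp
      then have "arcosh (minkowski x z) < arcosh (minkowski x y)"
        using hyp_ge1[OF xX yX] hyp_ge1[OF xX zX] by simp
      then have "hyp_dist x z < hyp_dist x y" by (simp add: hyp_dist_def)
      then show False using cl z by force
    qed
    then show "minkowski x y \<le> minkowski x y * cosh s + minkowski x e * sinh s" using zd by (simp add: mk_lin algebra_simps)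
  qed
  have "0 \<le> minkowski x e" using fo_hyp[OF a0 key] .
  then show ?thesis using that ey ee pe by blast
qed

lemma hyp_part:
  fixes p q x y :: "real \<times> 'a::euclidean_space" and \<epsilon> \<Delta> :: real
  assumes e0: "0 < \<epsilon>" and e1: "\<epsilon> \<le> 1"
    and pX: "p \<in> hyp_space" and qX: "q \<in> hyp_space" and xX: "x \<in> hyp_space"
    and seg: "shortest_segment hyp_dist hyp_space p q S" and cl: "closest_in hyp_dist S x y"
    and D0: "\<Delta> > 0" and LD: "hyp_dist p q \<le> \<Delta>"
    and hyp: "hyp_dist x y \<le> sqrt \<epsilon> * min (hyp_dist p y) (hyp_dist q y)"
  shows "hyp_dist p x + hyp_dist x q \<le> (1 + exp \<Delta> * \<epsilon>) * hyp_dist p q"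
proof -
  have yS: "y \<in> S" and clz: "\<forall>z\<in>S. hyp_dist x y \<le> hyp_dist x z" using cl unfolding closest_in_def by auto
  have L0: "0 \<le> hyp_dist p q" using hyp_nonneg[OF pX qX] .
  obtain a b where SX: "S \<subseteq> hyp_space" and ab: "a \<ge> 0" "b \<ge> 0" "a + b = hyp_dist p q" "hyp_dist p y = a" "hyp_dist y p = a" "hyp_dist q y = b" "hyp_dist y q = b"
    and Pa: "\<forall>s\<in>{0..a}. \<exists>z\<in>S. hyp_dist y z = s \<and> hyp_dist z y = s \<and> hyp_dist p z = a - s \<and> hyp_dist z p = a - s"
    and Pb: "\<forall>s\<in>{0..b}. \<exists>z\<in>S. hyp_dist y z = s \<and> hyp_dist z y = s \<and> hyp_dist q z = b - s \<and> hyp_dist z q = b - s"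
    by (rule seg_basic[OF seg yS L0])
  have yX: "y \<in> hyp_space" using SX yS by auto
  define h where "h = hyp_dist x y"
  have h0: "h \<ge> 0" using hyp_nonneg[OF xX yX] by (simp add: h_def)
  have "sqrt \<epsilon> * min a b \<le> sqrt \<epsilon> * a" "sqrt \<epsilon> * min a b \<le> sqrt \<epsilon> * b"
    using e0 by (auto intro!: mult_left_mono)
  then have hmin: "h \<le> sqrt \<epsilon> * a" "h \<le> sqrt \<epsilon> * b" using hyp ab by (auto simp: h_def)
  have se1: "sqrt \<epsilon> \<le> 1" using e1 by simp
  have "sqrt \<epsilon> * a \<le> 1 * a" "sqrt \<epsilon> * b \<le> 1 * b" using se1 ab by (intro mult_right_mono; simp)+
  then have ha: "h \<le> a" and hb: "h \<le> b" using hmin by linarith+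
  have aD: "a \<le> \<Delta>" and bD: "b \<le> \<Delta>" using ab LD by linarith+
  show ?thesis
  proof (cases "a = 0 \<or> b = 0")
    case True
    then have "h \<le> 0" using hmin by auto
    then have "h = 0" using h0 by simp
    then have "arcosh (minkowski x y) = 0" by (simp add: h_def hyp_dist_def)
    then have "minkowski x y = 1" using hyp_ge1[OF xX yX] by simp
    then have "x = y" using hyp_eq[OF xX yX] by blast
    moreover have "0 \<le> exp \<Delta> * \<epsilon> * hyp_dist p q" using e0 L0 by simp
    ultimately show ?thesis using ab by (simp add: hyp_sym algebra_simps)
  next
    case False
    then have a0: "a > 0" and b0: "b > 0" using ab by auto
    have sa: "sinh a > 0" and sb: "sinh b > 0" using a0 b0 by auto
    have Pa': "\<forall>s\<in>{0..a}. \<exists>z\<in>S. hyp_dist y z = s \<and> hyp_dist p z = a - s" using Pa by blast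
    have Pb': "\<forall>s\<in>{0..b}. \<exists>z\<in>S. hyp_dist y z = s \<and> hyp_dist q z = b - s" using Pb by blast
    obtain e where ey: "minkowski e y = 0" and ee: "minkowski e e = -1" and pe: "p = cosh a *\<^sub>R y + sinh a *\<^sub>R e" and xe: "0 \<le> minkowski x e"
      by (rule hyp_side[OF yX pX xX SX a0 ab(4) Pa' clz])
    obtain e' where ey': "minkowski e' y = 0" and ee': "minkowski e' e' = -1" and qe: "q = cosh b *\<^sub>R y + sinh b *\<^sub>R e'" and xe': "0 \<le> minkowski x e'"
      by (rule hyp_side[OF yX qX xX SX b0 ab(6) Pb' clz])
    have yy: "minkowski y y = 1" using hyp_ii[OF yX] .
    have "minkowski p q = cosh (a + b)" using hyp_cosh[OF pX qX] ab by simp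
    also have "\<dots> = cosh a * cosh b + sinh a * sinh b" by (rule cosh_add)
    finally have pq1: "minkowski p q = cosh a * cosh b + sinh a * sinh b" .
    have "minkowski p q = minkowski (cosh a *\<^sub>R y + sinh a *\<^sub>R e) (cosh b *\<^sub>R y + sinh b *\<^sub>R e')" using pe qe by simp
    also have "\<dots> = cosh a * cosh b * minkowski y y + cosh a * sinh b * minkowski e' y + sinh a * cosh b * minkowski e y + sinh a * sinh b * minkowski e e'"
      by (simp add: mk_lin mk_sym[of y e'] algebra_simps)
    also have "\<dots> = cosh a * cosh b + sinh a * sinh b * minkowski e e'" using yy ey ey' by simp
    finally have "sinh a * sinh b * minkowski e e' = sinh a * sinh b * 1" using pq1 by simp
    moreover have nz: "sinh a * sinh b \<noteq> 0" using sa sb by simp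
    ultimately have eee: "minkowski e e' = 1" by (metis mult_left_cancel)
    have "minkowski (e + e') y = 0" using ey ey' by (simp add: mk_lin)
    moreover have "minkowski (e + e') (e + e') = 0" using ee ee' eee by (simp add: mk_lin mk_sym[of e' e])
    ultimately have "e + e' = 0" by (intro null_zero[OF yX]) auto
    then have e'e: "e' = - e" by (simp add: eq_neg_iff_add_eq_0 add.commute)
    then have "minkowski x e \<le> 0" using xe' by (simp add: mk_lin)
    then have xe0: "minkowski x e = 0" using xe by simp
    have yx: "minkowski y x = cosh h" using hyp_cosh[OF yX xX] by (simp add: h_def hyp_sym)
    have ex: "minkowski e x = 0" using xe0 by (simp add: mk_sym)
    have "minkowski p x = cosh a * minkowski y x + sinh a * minkowski e x" using pe by (simp add: mk_lin)
    then have "minkowski p x = cosh a * cosh h" using yx ex by simp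
    then have dpx: "hyp_dist p x \<le> (1 + exp \<Delta> * \<epsilon>) * a"
      using hyp_ineq[OF e0 e1 a0 h0 hmin(1) ha aD] by (simp add: hyp_dist_def)
    have ex': "minkowski e' x = 0" using ex e'e by (simp add: mk_lin)
    have "minkowski q x = cosh b * minkowski y x + sinh b * minkowski e' x" using qe by (simp add: mk_lin)
    then have "minkowski x q = cosh b * cosh h" using yx ex' by (simp add: mk_sym)
    then have dqx: "hyp_dist x q \<le> (1 + exp \<Delta> * \<epsilon>) * b"
      using hyp_ineq[OF e0 e1 b0 h0 hmin(2) hb bD] by (simp add: hyp_dist_def)
    have "(1 + exp \<Delta> * \<epsilon>) * hyp_dist p q = (1 + exp \<Delta> * \<epsilon>) * a + (1 + exp \<Delta> * \<epsilon>) * b" by (simp only: ab(3)[symmetric] distrib_left)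
    then show ?thesis using dpx dqx by linarith
  qed
qed


theorem mainTheorem4:
  fixes \<epsilon> :: real
  assumes dim: "DIM('a::euclidean_space) \<ge> 2"
    and eps: "0 < \<epsilon>" "\<epsilon> \<le> 1"
  shows
    "(\<forall>(p::'a) q x S y.
        shortest_segment dist UNIV p q S \<and> closest_in dist S x y \<and>
        dist x y \<le> sqrt \<epsilon> * min (dist p y) (dist q y)
        \<longrightarrow> dist p x + dist x q \<le> (1 + \<epsilon>) * dist p q)
   \<and> (\<forall>(p::real \<times> 'a) q x S y.
        p \<in> sph_space \<and> q \<in> sph_space \<and> x \<in> sph_space \<and>
        shortest_segment sph_dist sph_space p q S \<and> closest_in sph_dist S x y \<and>
        sph_dist x y \<le> sqrt \<epsilon> * min (sph_dist p y) (sph_dist q y)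
        \<longrightarrow> sph_dist p x + sph_dist x q \<le> (1 + \<epsilon>) * sph_dist p q)
   \<and> (\<forall>(p::real \<times> 'a) q x S y \<Delta>.
        p \<in> hyp_space \<and> q \<in> hyp_space \<and> x \<in> hyp_space \<and>
        shortest_segment hyp_dist hyp_space p q S \<and> closest_in hyp_dist S x y \<and>
        \<Delta> > 0 \<and> hyp_dist p q \<le> \<Delta> \<and>
        hyp_dist x y \<le> sqrt \<epsilon> * min (hyp_dist p y) (hyp_dist q y)
        \<longrightarrow> hyp_dist p x + hyp_dist x q \<le> (1 + exp \<Delta> * \<epsilon>) * hyp_dist p q)"
    apply (intro conjI allI impI)
    apply (elim conjE; rule euclid_part[OF eps(1) eps(2)]; assumption)
   apply (elim conjE; rule sphere_part[OF eps(1) eps(2)]; assumption)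
  apply (elim conjE; rule hyp_part[OF eps(1) eps(2)]; assumption)
  done

end
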